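(* There is an absolute constant $K$ such that the following holds. Let $C\ge1$, let $I$ be an instance of dynamic bin packing with migration delays in which every item has duration at least $1$, run Algorithm 3 (described in the context) on $I$, and let $\tilde I_s$ be the instance of small parts defined in the context. Then $\mathrm{FirstFit}(\tilde I_s)\le K\sqrt{C}\cdot\mathrm{OPT}(I)$.
   Context: Dynamic bin packing with migration delays: bins have capacity $1$; items arrive online at times $a_i\ge0$ with size $s_i\in[0,1]$ and initial duration $d_i>0$ (unknown at arrival). Each migration of an item (moving it to another bin) increases its duration by $C$. A bin is open while nonempty. For an instance $J$ (a set of items with arrival times, sizes, durations), $\mathrm{FirstFit}(J)$ is the total active time $\int_0^\infty(\text{number of open bins at } t)\,dt$ of the FirstFit algorithm on $J$ (each arriving item goes into the earliest-opened open bin with enough remaining capacity, else a new bin; no migrations), and $\mathrm{OPT}(J)=\int_0^\infty\mathrm{OPT}_t\,dt$ with $\mathrm{OPT}_t$ the minimum number of unit bins needed to pack the items of $J$ present at time $t$. Algorithm 3: maintain two disjoint pools of bins $I_s$ and $I_b$. Each arriving item is placed into $I_s$ by FirstFit (within that pool). When an item has been in $I_s$ for exactly $\sqrt{C}$ time, it is migrated into $I_b$ by FirstFit. When an item has been in $I_b$ for exactly $C+\sqrt{C}$ time since its most recent migration, it is migrated into $I_b$ by FirstFit. Small parts: for each item $i$ of $I$, let $t_1$ be the time of its first migration by Algorithm 3, if any. The small part of $i$ is an item of size $s_i$, arrival time $a_i$, and duration $t_1-a_i$ if $i$ is ever migrated and $d_i$ otherwise. $\tilde I_s$ is the instance consisting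 of all small parts. *)

theory Defs
  imports "HOL-Analysis.Analysis"
begin

type_synonym item = "real \<times> real \<times> real"

definition arr :: "item \<Rightarrow> real" where "arr x = fst x"
definition sz  :: "item \<Rightarrow> real" where "sz x = fst (snd x)"
definition dur :: "item \<Rightarrow> real" where "dur x = snd (snd x)"

definition present :: "item \<Rightarrow> real \<Rightarrow> bool" where
  "present x t \<longleftrightarrow> arr x \<le> t \<and> t < arr x + dur x"

definition valid_instance :: "item list \<Rightarrow> bool" where
  "valid_instance J \<longleftrightarrow> (\<forall>x\<in>set J. 0 \<le> arr x \<and> 0 \<le> sz x \<and> sz x \<le> 1 \<and> 0 < dur x)"

text \<open>Bins are numbered 0,1,2,... in order of opening; a bin is open at
  time t iff some item assigned to it is present at t.\<close>
definition ff_step :: "(item \<times> nat) list \<Rightarrow> item \<Rightarrow> (item \<times> nat) list" where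
  "ff_step A x =
    (let t = arr x;
         openb = {b. \<exists>y. (y, b) \<in> set A \<and> present y t};
         load = (\<lambda>b. sum_list (map (sz \<circ> fst) (filter (\<lambda>(y, c). c = b \<and> present y t) A)));
         cand = {b \<in> openb. load b + sz x \<le> 1};
         b = (if cand = {} then card (snd ` set A) else Min cand)
     in A @ [(x, b)])"

text \<open>Items are processed in order of arrival (ties broken by position in the list,
  since sort_key is stable).\<close>
definition ff_assign :: "item list \<Rightarrow> (item \<times> nat) list" where
  "ff_assign J = fold (\<lambda>x A. ff_step A x) (sort_key arr J) []"

definition ff_open_bins :: "item list \<Rightarrow> real \<Rightarrow> nat" where
  "ff_open_bins J t = card {b. \<exists>y. (y, b) \<in> set (ff_assign J) \<and> present y t}"

definition FirstFit :: "item list \<Rightarrow> real" where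
  "FirstFit J = (\<integral>t. real (ff_open_bins J t) \<partial>lborel)"

definition OPT_t :: "item list \<Rightarrow> real \<Rightarrow> nat" where
  "OPT_t J t = (LEAST k. \<exists>f :: nat \<Rightarrow> nat.
      (\<forall>i<length J. present (J ! i) t \<longrightarrow> f i < k) \<and>
      (\<forall>b<k. (\<Sum>i | i < length J \<and> present (J ! i) t \<and> f i = b. sz (J ! i)) \<le> 1))"

definition OPT :: "item list \<Rightarrow> real" where
  "OPT J = (\<integral>t. real (OPT_t J t) \<partial>lborel)"

text \<open>Algorithm 3: an item sits in pool I_s from its arrival until it has been there for
  exactly sqrt C time, at which moment it is (first) migrated -- provided it is still present,
  i.e. its (so far unmodified) duration exceeds sqrt C. Before the first migration the
  duration of an item is its initial duration, so the time of the first migration of item x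
  is determined as follows (None = never migrated).\<close>
definition first_migration :: "real \<Rightarrow> item \<Rightarrow> real option" where
  "first_migration C x = (if sqrt C < dur x then Some (arr x + sqrt C) else None)"

definition small_part :: "real \<Rightarrow> item \<Rightarrow> item" where
  "small_part C x = (case first_migration C x of
       Some t1 \<Rightarrow> (arr x, sz x, t1 - arr x)
     | None \<Rightarrow> (arr x, sz x, dur x))"

definition small_parts :: "real \<Rightarrow> item list \<Rightarrow> item list" where
  "small_parts C J = map (small_part C) J"

end

theory Submission
  imports Defs
begin

definition F :: "item list \<Rightarrow> (item \<times> nat) list" where
  "F xs = fold (\<lambda>x A. ff_step A x) xs []"

definition ob :: "(item \<times> nat) list \<Rightarrow> real \<Rightarrow> nat set" where
  "ob A t = {b. \<exists>y. (y, b) \<in> set A \<and> present y t}"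

definition ld :: "(item \<times> nat) list \<Rightarrow> real \<Rightarrow> nat \<Rightarrow> real" where
  "ld A t b = sum_list (map (sz \<circ> fst) (filter (\<lambda>(y, c). c = b \<and> present y t) A))"

lemma ff_step_eq: "ff_step A x = A @ [(x, (if {b \<in> ob A (arr x). ld A (arr x) b + sz x \<le> 1} = {}
   then card (snd ` set A) else Min {b \<in> ob A (arr x). ld A (arr x) b + sz x \<le> 1}))]"
  unfolding ff_step_def ob_def ld_def Let_def by simp

lemma F_snoc: "F (xs @ [x]) = ff_step (F xs) x"
  unfolding F_def by simp

lemma F_Nil: "F [] = []" unfolding F_def by simp

lemma ob_sub: "ob A t \<subseteq> snd ` set A"
  unfolding ob_def by force

lemma fin_ob: "finite (ob A t)"
  using ob_sub finite_subset by blast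

lemma F_len: "length (F xs) = length xs"
  by (induction xs rule: rev_induct) (auto simp: F_snoc F_Nil ff_step_eq)

lemma F_fst: "map fst (F xs) = xs"
  by (induction xs rule: rev_induct) (auto simp: F_snoc F_Nil ff_step_eq)

lemma F_take: "p \<le> length xs \<Longrightarrow> take p (F xs) = F (take p xs)"
proof (induction xs rule: rev_induct)
  case Nil then show ?case by (simp add: F_Nil)
next
  case (snoc x xs)
  show ?case
  proof (cases "p \<le> length xs")
    case True
    then show ?thesis using snoc by (simp add: F_snoc ff_step_eq F_len)
  next
    case False
    then have "p = length (xs @ [x])" using snoc by simp
    then show ?thesis by (simp add: F_len)
  qed
qed

lemma F_num: "snd ` set (F xs) = {..< card (snd ` set (F xs))}"
proof (induction xs rule: rev_induct)
  case Nil then show ?case by (simp add: F_Nil)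
next
  case (snoc x xs)
  define A where "A = F xs"
  define cand where "cand = {b \<in> ob A (arr x). ld A (arr x) b + sz x \<le> 1}"
  have IH: "snd ` set A = {..< card (snd ` set A)}" using snoc A_def by simp
  have FE: "F (xs @ [x]) = A @ [(x, if cand = {} then card (snd ` set A) else Min cand)]"
    unfolding F_snoc A_def cand_def by (rule ff_step_eq)
  show ?case
  proof (cases "cand = {}")
    case True
    then have "F (xs @ [x]) = A @ [(x, card (snd ` set A))]"
      using FE by simp
    then have "snd ` set (F (xs @ [x])) = insert (card (snd ` set A)) (snd ` set A)" by auto
    also have "\<dots> = {..< Suc (card (snd ` set A))}" using IH by (metis lessThan_Suc)
    finally show ?thesis by simp
  next
    case False
    have "finite cand" using fin_ob cand_def by auto
    then have "Min cand \<in> cand" using False by auto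
    then have "Min cand \<in> snd ` set A" using ob_sub cand_def by auto
    moreover have "F (xs @ [x]) = A @ [(x, Min cand)]"
      using False FE by simp
    ultimately have "snd ` set (F (xs @ [x])) = snd ` set A" by auto
    then show ?thesis using IH by simp
  qed
qed

lemma F_nth: "p < length xs \<Longrightarrow> take (Suc p) (F xs) = ff_step (take p (F xs)) (xs ! p)"
  by (simp add: F_take F_len take_Suc_conv_app_nth F_snoc)

lemma step_choice:
  assumes num: "snd ` set A = {..< card (snd ` set A)}"
    and st: "ff_step A x = A @ [(x, b)]"
  shows "b \<in> snd ` set A \<Longrightarrow> b \<in> ob A (arr x)"
    and "b' \<in> ob A (arr x) \<Longrightarrow> b' < b \<Longrightarrow> ld A (arr x) b' + sz x > 1"
proof -
  define cand where "cand = {b \<in> ob A (arr x). ld A (arr x) b + sz x \<le> 1}"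
  have fc: "finite cand" using fin_ob cand_def by auto
  have bdef: "b = (if cand = {} then card (snd ` set A) else Min cand)"
  proof -
    have "ff_step A x = A @ [(x, if cand = {} then card (snd ` set A) else Min cand)]"
      unfolding cand_def by (rule ff_step_eq)
    then show ?thesis using st by simp
  qed
  show "b \<in> snd ` set A \<Longrightarrow> b \<in> ob A (arr x)"
  proof -
    assume "b \<in> snd ` set A"
    then have "b < card (snd ` set A)" using num by blast
    then have "cand \<noteq> {}" using bdef by auto
    then have "b \<in> cand" using bdef fc by auto
    then show ?thesis using cand_def by auto
  qed
  show "b' \<in> ob A (arr x) \<Longrightarrow> b' < b \<Longrightarrow> ld A (arr x) b' + sz x > 1"
  proof -
    assume a: "b' \<in> ob A (arr x)" "b' < b"
    have "b' \<notin> cand"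
    proof
      assume "b' \<in> cand"
      then have "cand \<noteq> {}" by auto
      then have "b = Min cand" using bdef by auto
      then show False using \<open>b' \<in> cand\<close> a fc by (metis Min_le not_le)
    qed
    then show ?thesis using a cand_def by auto
  qed
qed

lemma sum_list_filter_if: "sum_list (map g (filter P xs)) = sum_list (map (\<lambda>x. if P x then g x else (0::real)) xs)"
  by (induction xs) auto

lemma ld_sum: "ld A s b = (\<Sum>q<length A. if snd (A!q) = b \<and> present (fst (A!q)) s then sz (fst (A!q)) else 0)"
proof -
  have "ld A s b = sum_list (map (\<lambda>x. if (\<lambda>(y, c). c = b \<and> present y s) x then (sz \<circ> fst) x else 0) A)"
    unfolding ld_def by (rule sum_list_filter_if)
  also have "\<dots> = (\<Sum>q<length A. (\<lambda>x. if (\<lambda>(y, c). c = b \<and> present y s) x then (sz \<circ> fst) x else 0) (A!q))"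
    by (simp add: sum_list_sum_nth atLeast0LessThan)
  also have "\<dots> = (\<Sum>q<length A. if snd (A!q) = b \<and> present (fst (A!q)) s then sz (fst (A!q)) else 0)"
    by (intro sum.cong refl) (auto split: prod.splits)
  finally show ?thesis .
qed

lemma A_nth: "q < length L \<Longrightarrow> F L ! q = (L ! q, snd (F L ! q))"
  using F_fst[of L] F_len[of L] by (metis nth_map prod.collapse)

lemma A_fst[simp]: "q < length L \<Longrightarrow> fst (F L ! q) = L ! q"
  using A_nth[of q L] by (metis fst_conv)

lemma set_F: "set (F L) = {(L!q, snd (F L ! q)) | q. q < length L}"
proof -
  have "set (F L) = {F L ! q | q. q < length (F L)}" by (simp add: set_conv_nth)
  also have "\<dots> = {(L!q, snd (F L ! q)) | q. q < length L}"
    using A_nth[of _ L] F_len[of L] by (intro Collect_cong) (metis (no_types, lifting))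
  finally show ?thesis .
qed

lemma set_take: "p \<le> length L \<Longrightarrow> set (take p (F L)) = {(L!q, snd (F L ! q)) | q. q < p}"
proof -
  assume p: "p \<le> length L"
  have "set (take p (F L)) = {take p (F L) ! q | q. q < length (take p (F L))}" by (simp add: set_conv_nth)
  also have "\<dots> = {(L!q, snd (F L ! q)) | q. q < p}"
  proof -
    have l: "length (take p (F L)) = p" using p F_len[of L] by simp
    have e: "\<And>q. q < p \<Longrightarrow> take p (F L) ! q = (L!q, snd (F L ! q))"
      using p A_nth[of _ L] by simp
    show ?thesis unfolding l using e by (intro Collect_cong) metis
  qed
  finally show ?thesis .
qed

lemma snd_set_take: "p \<le> length L \<Longrightarrow> snd ` set (take p (F L)) = (\<lambda>q. snd (F L ! q)) ` {..<p}"
proof -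
  assume p: "p \<le> length L"
  have "{(L!q, snd (F L ! q)) | q. q < p} = (\<lambda>q. (L!q, snd (F L ! q))) ` {..<p}" by auto
  then show ?thesis unfolding set_take[OF p] by (simp add: image_image)
qed

lemma ob_take: "p \<le> length L \<Longrightarrow> ob (take p (F L)) s = {b. \<exists>q<p. snd (F L ! q) = b \<and> present (L!q) s}"
proof -
  assume p: "p \<le> length L"
  note S = set_take[OF p]
  show ?thesis
  proof (intro set_eqI iffI)
    fix b assume "b \<in> ob (take p (F L)) s"
    have "\<exists>y. (y, b) \<in> set (take p (F L)) \<and> present y s" using \<open>b \<in> ob (take p (F L)) s\<close> unfolding ob_def by (rule CollectD)
    then obtain y where "(y, b) \<in> set (take p (F L))" "present y s" by (elim exE conjE)
    then obtain q where "(y, b) = (L!q, snd (F L ! q))" "q < p" "present y s" unfolding S mem_Collect_eq by (elim exE conjE)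
    then show "b \<in> {b. \<exists>q<p. snd (F L ! q) = b \<and> present (L!q) s}" by (simp only: prod.inject) blast
  next
    fix b assume "b \<in> {b. \<exists>q<p. snd (F L ! q) = b \<and> present (L!q) s}"
    then obtain q where q: "q < p" "snd (F L ! q) = b" "present (L!q) s" by blast
    then have "(L!q, b) \<in> set (take p (F L))" unfolding S
      by (intro CollectI exI[of _ q] conjI) (simp_all add: q)
    then show "b \<in> ob (take p (F L)) s" unfolding ob_def using q(3)
      by (intro CollectI exI[of _ "L!q"] conjI)
  qed
qed

lemma ld_take: "p \<le> length L \<Longrightarrow> ld (take p (F L)) s b =
  (\<Sum>q<p. if snd (F L ! q) = b \<and> present (L!q) s then sz (L!q) else 0)"
proof -
  assume p: "p \<le> length L"
  show ?thesis unfolding ld_sum using F_len[of L] A_nth[of _ L] p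
    by (intro sum.cong) (auto simp: min_def)
qed

lemma step_at:
  assumes "p < length L"
  shows "ff_step (take p (F L)) (L!p) = take p (F L) @ [(L!p, snd (F L ! p))]"
  using F_nth[OF assms] A_nth[OF assms] assms F_len[of L]
  by (metis take_Suc_conv_app_nth)

lemma num_take: "p \<le> length L \<Longrightarrow> snd ` set (take p (F L)) = {..< card (snd ` set (take p (F L)))}"
  using F_take[of p L] F_num by simp

lemma key_open:
  assumes srt: "sorted (map arr L)"
    and p: "p < length L" and q': "q' < length L"
    and bq': "snd (F L ! q') = b" and pq': "present (L!q') t" and pt: "arr (L!p) \<le> t"
    and blt: "b < snd (F L ! p)"
  shows "\<exists>q<p. snd (F L ! q) = b \<and> present (L!q) (arr (L!p))"
proof -
  let ?\<beta> = "\<lambda>q. snd (F L ! q)"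
  have arrmono: "\<And>i j. i \<le> j \<Longrightarrow> j < length L \<Longrightarrow> arr (L!i) \<le> arr (L!j)"
    using sorted_nth_mono[OF srt] by simp
  have "?\<beta> p \<in> snd ` set (take (Suc p) (F L))"
    unfolding snd_set_take[of "Suc p" L, OF Suc_leI[OF p]] by simp
  then have "?\<beta> p < card (snd ` set (take (Suc p) (F L)))"
    using num_take[of "Suc p" L] p by auto
  then have "b \<in> snd ` set (take (Suc p) (F L))"
    using num_take[of "Suc p" L] p blt by auto
  then obtain q where q: "q < Suc p" "?\<beta> q = b"
    unfolding snd_set_take[of "Suc p" L, OF Suc_leI[OF p]] by auto
  then have qp: "q < p" using blt by (cases "q = p") auto
  show ?thesis
  proof (cases "q' < p")
    case True
    then have "arr (L!q') \<le> arr (L!p)" using arrmono[of q' p] p by simp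
    then show ?thesis using True bq' pq' pt unfolding present_def by (intro exI[of _ q'] conjI) auto
  next
    case False
    have "q' \<noteq> p" using bq' blt by auto
    then have "q' > p" using False by simp
    define r where "r = (LEAST r. p \<le> r \<and> r < length L \<and> ?\<beta> r = b)"
    have rP: "p \<le> r \<and> r < length L \<and> ?\<beta> r = b"
      unfolding r_def using \<open>q' > p\<close> q' bq' LeastI[of "\<lambda>r. p \<le> r \<and> r < length L \<and> ?\<beta> r = b" q'] by simp
    have rmin: "\<And>r'. p \<le> r' \<Longrightarrow> r' < length L \<Longrightarrow> ?\<beta> r' = b \<Longrightarrow> r \<le> r'"
      unfolding r_def by (simp add: Least_le)
    have "r \<noteq> p" using rP blt by auto
    then have rp: "p < r" using rP by auto
    have "b \<in> snd ` set (take r (F L))"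
    proof -
      have rle: "r \<le> length L" using rP by simp
      show ?thesis unfolding snd_set_take[OF rle] using rP qp q rp by auto
    qed
    moreover have "ff_step (take r (F L)) (L!r) = take r (F L) @ [(L!r, b)]"
      using step_at[of r L] rP by simp
    ultimately have "b \<in> ob (take r (F L)) (arr (L!r))"
      using step_choice(1)[OF num_take] rP by auto
    then obtain q'' where q'': "q'' < r" "?\<beta> q'' = b" "present (L!q'') (arr (L!r))"
      using ob_take[of r L] rP by auto
    have "q'' < p" using rmin[of q''] q'' rP by force
    moreover have "arr (L!p) \<le> arr (L!r)" using arrmono[of p r] rp rP by simp
    moreover have "arr (L!q'') \<le> arr (L!p)" using arrmono[of q'' p] p \<open>q'' < p\<close> by simp
    ultimately show ?thesis using q'' unfolding present_def by (intro exI[of _ q''] conjI) auto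
  qed
qed

lemma ob_full: "ob (F L) s = {b. \<exists>q<length L. snd (F L ! q) = b \<and> present (L!q) s}"
  using ob_take[of "length L" L] F_len[of L] by simp

lemma pointwise:
  fixes L :: "item list" and t :: real
  assumes srt: "sorted (map arr L)" and nn: "\<forall>y\<in>set L. 0 \<le> sz y"
  defines "Nb \<equiv> (\<Sum>q<length L. if present (L!q) t \<and> 1/2 < sz (L!q) then 1 else 0::real)"
  shows "real (card (ob (F L) t)) \<le> Nb \<or>
    (\<exists>p<length L. present (L!p) t \<and> real (card (ob (F L) t)) \<le> Nb + 1 + 2 *
        (\<Sum>q<length L. if present (L!q) (arr (L!p)) then sz (L!q) else 0))"
proof -
  let ?\<beta> = "\<lambda>q. snd (F L ! q)"
  let ?n = "length L"
  define Ob where "Ob = {b. \<exists>q<?n. ?\<beta> q = b \<and> present (L!q) t \<and> 1/2 < sz (L!q)}"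
  define Os where "Os = {b. \<exists>q<?n. ?\<beta> q = b \<and> present (L!q) t \<and> sz (L!q) \<le> 1/2}"
  have Oeq: "ob (F L) t = Ob \<union> Os" unfolding ob_full Ob_def Os_def by force
  have finOb: "finite Ob" unfolding Ob_def by simp
  have finOs: "finite Os" unfolding Os_def by simp
  have cOb: "real (card Ob) \<le> Nb"
  proof -
    have "Ob = ?\<beta> ` {q. q < ?n \<and> present (L!q) t \<and> 1/2 < sz (L!q)}" unfolding Ob_def by auto
    then have "card Ob \<le> card {q. q < ?n \<and> present (L!q) t \<and> 1/2 < sz (L!q)}"
      by (simp add: card_image_le)
    also have "real (card {q. q < ?n \<and> present (L!q) t \<and> 1/2 < sz (L!q)}) = Nb"
    proof -
      have e: "{q. q < ?n \<and> present (L!q) t \<and> 1/2 < sz (L!q)} = {q\<in>{..<?n}. present (L!q) t \<and> 1/2 < sz (L!q)}" by auto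
      have "Nb = (\<Sum>q\<in>{q\<in>{..<?n}. present (L!q) t \<and> 1/2 < sz (L!q)}. 1)"
        unfolding Nb_def by (rule sum.inter_filter[symmetric]) simp
      then show ?thesis unfolding e by simp
    qed
    finally show ?thesis by simp
  qed
  have cO: "card (ob (F L) t) \<le> card Ob + card Os"
    unfolding Oeq by (rule card_Un_le)
  show ?thesis
  proof (cases "Os = {}")
    case True
    then show ?thesis using cO cOb by simp
  next
    case False
    define j where "j = Max Os"
    have "j \<in> Os" unfolding j_def using False finOs by simp
    then obtain p where p: "p < ?n" "?\<beta> p = j" "present (L!p) t" "sz (L!p) \<le> 1/2"
      unfolding Os_def by blast
    define a where "a = arr (L!p)"
    define B where "B = {b \<in> Os. b < j}"
    have "Os \<subseteq> insert j B" unfolding B_def using finOs j_def by (auto simp: le_neq_trans)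
    moreover have finB: "finite B" unfolding B_def using finOs by simp
    ultimately have "card Os \<le> card (insert j B)" by (intro card_mono) auto
    also have "\<dots> \<le> Suc (card B)" using finB by (simp add: card_insert_if)
    finally have cOs: "card Os \<le> Suc (card B)" .
    have plen: "p \<le> ?n" using p by simp
    have num: "snd ` set (take p (F L)) = {..< card (snd ` set (take p (F L)))}"
      by (rule num_take[OF plen])
    have st: "ff_step (take p (F L)) (L!p) = take p (F L) @ [(L!p, ?\<beta> p)]"
      by (rule step_at[OF p(1)])
    have ldb: "1/2 < ld (take p (F L)) a b" if bB: "b \<in> B" for b
    proof -
      from bB obtain q' where q': "q' < ?n" "?\<beta> q' = b" "present (L!q') t" "b < j"
        unfolding B_def Os_def by blast
      have "arr (L!p) \<le> t" using p(3) unfolding present_def by simp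
      then have "\<exists>q<p. ?\<beta> q = b \<and> present (L!q) a"
        unfolding a_def using key_open[OF srt p(1) q'(1) q'(2) q'(3)] q'(4) p(2) by blast
      then have "b \<in> ob (take p (F L)) a" unfolding ob_take[OF plen] by blast
      then have "1 < ld (take p (F L)) a b + sz (L!p)"
        unfolding a_def using step_choice(2)[OF num st] q'(4) p(2) by blast
      then show ?thesis using p(4) by simp
    qed
    have nnq: "\<And>q. q < ?n \<Longrightarrow> 0 \<le> sz (L!q)" using nn by simp
    have "real (card B) * (1/2) = (\<Sum>b\<in>B. 1/2)" by simp
    also have "\<dots> \<le> (\<Sum>b\<in>B. ld (take p (F L)) a b)"
      using ldb by (intro sum_mono) (simp add: less_imp_le)
    also have "\<dots> = (\<Sum>b\<in>B. \<Sum>q<p. if ?\<beta> q = b \<and> present (L!q) a then sz (L!q) else 0)"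
      using ld_take[OF plen] by simp
    also have "\<dots> = (\<Sum>q<p. \<Sum>b\<in>B. if ?\<beta> q = b \<and> present (L!q) a then sz (L!q) else 0)"
      by (rule sum.swap)
    also have "\<dots> = (\<Sum>q<p. if ?\<beta> q \<in> B \<and> present (L!q) a then sz (L!q) else 0)"
    proof (intro sum.cong refl)
      fix q
      have "(\<Sum>b\<in>B. if ?\<beta> q = b \<and> present (L!q) a then sz (L!q) else 0) =
            (\<Sum>b\<in>B. if ?\<beta> q = b then (if present (L!q) a then sz (L!q) else 0) else 0)"
        by (intro sum.cong refl) auto
      also have "\<dots> = (if ?\<beta> q \<in> B then (if present (L!q) a then sz (L!q) else 0) else 0)"
        using finOs B_def by (simp add: sum.delta)
      finally show "(\<Sum>b\<in>B. if ?\<beta> q = b \<and> present (L!q) a then sz (L!q) else 0) =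
           (if ?\<beta> q \<in> B \<and> present (L!q) a then sz (L!q) else 0)" by simp
    qed
    also have "\<dots> \<le> (\<Sum>q<p. if present (L!q) a then sz (L!q) else 0)"
      using nnq p(1) by (intro sum_mono) auto
    also have "\<dots> \<le> (\<Sum>q<?n. if present (L!q) a then sz (L!q) else 0)"
      using nnq plen by (intro sum_mono2) auto
    finally have "real (card B) \<le> 2 * (\<Sum>q<?n. if present (L!q) a then sz (L!q) else 0)" by simp
    then have "real (card (ob (F L) t)) \<le> Nb + 1 + 2 * (\<Sum>q<?n. if present (L!q) a then sz (L!q) else 0)"
      using cO cOb cOs by linarith
    then show ?thesis using p a_def by blast
  qed
qed

definition okpack :: "item list \<Rightarrow> real \<Rightarrow> nat \<Rightarrow> (nat \<Rightarrow> nat) \<Rightarrow> bool" where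
  "okpack J t k f \<longleftrightarrow> (\<forall>i<length J. present (J ! i) t \<longrightarrow> f i < k) \<and>
      (\<forall>b<k. (\<Sum>i | i < length J \<and> present (J ! i) t \<and> f i = b. sz (J ! i)) \<le> 1)"

lemma OPT_t_alt: "OPT_t J t = (LEAST k. \<exists>f. okpack J t k f)"
  unfolding OPT_t_def okpack_def by simp

lemma okpack_n:
  assumes v: "valid_instance J"
  shows "okpack J t (length J) id"
proof -
  have bnd: "(\<Sum>i | i < length J \<and> present (J ! i) t \<and> id i = b. sz (J ! i)) \<le> 1" if b: "b < length J" for b
  proof -
    have "sz (J ! b) \<le> 1" using v b unfolding valid_instance_def by (meson nth_mem)
    show ?thesis
    proof (cases "present (J ! b) t")
      case True
      then have E: "{i. i < length J \<and> present (J ! i) t \<and> id i = b} = {b}" using b by auto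
      show ?thesis unfolding E using \<open>sz (J ! b) \<le> 1\<close> by simp
    next
      case False
      then have E: "{i. i < length J \<and> present (J ! i) t \<and> id i = b} = {}" by auto
      show ?thesis unfolding E by simp
    qed
  qed
  show ?thesis unfolding okpack_def by (intro conjI allI impI bnd) simp_all
qed

lemma opt_ex:
  assumes v: "valid_instance J"
  shows "\<exists>f. okpack J t (OPT_t J t) f"
proof -
  have "\<exists>k f. okpack J t k f" using okpack_n[OF v, of t] by (intro exI)
  then show ?thesis unfolding OPT_t_alt by (rule LeastI_ex)
qed

lemma opt_le_n:
  assumes v: "valid_instance J"
  shows "OPT_t J t \<le> length J"
proof -
  have "\<exists>f. okpack J t (length J) f" using okpack_n[OF v, of t] by (intro exI)
  then show ?thesis unfolding OPT_t_alt by (rule Least_le)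
qed

lemma opt_zero:
  assumes "\<forall>i<length J. \<not> present (J!i) t"
  shows "OPT_t J t = 0"
proof -
  have "okpack J t 0 id" using assms unfolding okpack_def by simp
  then have "\<exists>f. okpack J t 0 f" by (intro exI)
  then show ?thesis unfolding OPT_t_alt by (rule Least_eq_0)
qed

lemma opt_ge1:
  assumes v: "valid_instance J" and i: "i < length J" "present (J!i) t"
  shows "1 \<le> OPT_t J t"
proof -
  obtain f where "okpack J t (OPT_t J t) f" using opt_ex[OF v] by blast
  then have "\<forall>i<length J. present (J ! i) t \<longrightarrow> f i < OPT_t J t" unfolding okpack_def by (rule conjunct1)
  then have "f i < OPT_t J t" using i by simp
  then show ?thesis by simp
qed

lemma opt_big:
  assumes v: "valid_instance J"
  shows "card {i. i < length J \<and> present (J!i) t \<and> 1/2 < sz (J!i)} \<le> OPT_t J t"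
proof -
  obtain f where f: "okpack J t (OPT_t J t) f" using opt_ex[OF v] by blast
  let ?P = "{i. i < length J \<and> present (J!i) t \<and> 1/2 < sz (J!i)}"
  have nn: "\<And>i. i < length J \<Longrightarrow> 0 \<le> sz (J!i)" using v unfolding valid_instance_def by (meson nth_mem)
  have A1: "\<forall>i<length J. present (J ! i) t \<longrightarrow> f i < OPT_t J t" using f unfolding okpack_def by (rule conjunct1)
  have A2: "\<forall>b<OPT_t J t. (\<Sum>i | i < length J \<and> present (J ! i) t \<and> f i = b. sz (J ! i)) \<le> 1"
    using f unfolding okpack_def by (rule conjunct2)
  have "inj_on f ?P"
  proof (rule inj_onI)
    fix i i' assume ii: "i \<in> ?P" "i' \<in> ?P" "f i = f i'"
    show "i = i'"
    proof (rule ccontr)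
      assume ne: "i \<noteq> i'"
      let ?b = "f i"
      have "?b < OPT_t J t" using A1 ii(1) by simp
      then have le1: "(\<Sum>k | k < length J \<and> present (J ! k) t \<and> f k = ?b. sz (J ! k)) \<le> 1"
        using A2 by simp
      have "sz (J!i) + sz (J!i') = (\<Sum>k\<in>{i, i'}. sz (J ! k))" using ne by simp
      also have "\<dots> \<le> (\<Sum>k | k < length J \<and> present (J ! k) t \<and> f k = ?b. sz (J ! k))"
        using ii nn by (intro sum_mono2) auto
      finally have "sz (J!i) + sz (J!i') \<le> 1" using le1 by linarith
      moreover have "1/2 < sz (J!i)" "1/2 < sz (J!i')" using ii(1,2) by simp_all
      ultimately show False by linarith
    qed
  qed
  moreover have "f ` ?P \<subseteq> {..< OPT_t J t}" using A1 by auto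
  ultimately have "card ?P \<le> card {..< OPT_t J t}" by (rule card_inj_on_le) simp
  then show ?thesis by simp
qed

lemma opt_W:
  assumes v: "valid_instance J"
  shows "(\<Sum>i<length J. if present (J!i) t then sz (J!i) else 0) \<le> real (OPT_t J t)"
proof -
  obtain f where f: "okpack J t (OPT_t J t) f" using opt_ex[OF v] by blast
  let ?P = "{i. i < length J \<and> present (J!i) t}"
  have "(\<Sum>i<length J. if present (J!i) t then sz (J!i) else 0) = (\<Sum>i\<in>?P. sz (J!i))"
  proof -
    have e: "?P = {i\<in>{..<length J}. present (J!i) t}" by auto
    show ?thesis unfolding e by (rule sum.inter_filter[symmetric]) simp
  qed
  also have "\<dots> = (\<Sum>b\<in>{..<OPT_t J t}. \<Sum>i\<in>{i\<in>?P. f i = b}. sz (J!i))"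
  proof (rule sum.group[symmetric])
    show "finite ?P" by simp
    show "finite {..<OPT_t J t}" by simp
    have "\<forall>i<length J. present (J ! i) t \<longrightarrow> f i < OPT_t J t" using f unfolding okpack_def by (rule conjunct1)
    then show "f ` ?P \<subseteq> {..<OPT_t J t}" by auto
  qed
  also have "\<dots> \<le> (\<Sum>b\<in>{..<OPT_t J t}. 1)"
  proof (intro sum_mono)
    fix b assume "b \<in> {..<OPT_t J t}"
    moreover have "\<forall>b<OPT_t J t. (\<Sum>i | i < length J \<and> present (J ! i) t \<and> f i = b. sz (J ! i)) \<le> 1"
      using f unfolding okpack_def by (rule conjunct2)
    ultimately have "(\<Sum>i | i < length J \<and> present (J ! i) t \<and> f i = b. sz (J ! i)) \<le> 1"
      by simp
    moreover have "{i\<in>?P. f i = b} = {i. i < length J \<and> present (J ! i) t \<and> f i = b}" by auto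
    ultimately show "(\<Sum>i\<in>{i\<in>?P. f i = b}. sz (J!i)) \<le> 1" by simp
  qed
  finally show ?thesis by simp
qed

lemma pres_sets: "{t. map (\<lambda>x. present x t) J = l} \<in> sets borel"
proof (induction J arbitrary: l)
  case Nil
  then show ?case by (cases "l = []") auto
next
  case (Cons x J)
  show ?case
  proof (cases l)
    case Nil
    then show ?thesis by simp
  next
    case (Cons b l')
    have "{t. present x t} = {arr x ..< arr x + dur x}" unfolding present_def by auto
    then have P: "{t. present x t} \<in> sets borel" by simp
    have Q: "{t. present x t = b} \<in> sets borel"
    proof (cases b)
      case True then show ?thesis using P by simp
    next
      case False
      have "{t. present x t = b} = UNIV - {t. present x t}" using False by auto
      then show ?thesis using P by auto
    qed
    have "{t. map (\<lambda>x. present x t) (x # J) = l} = {t. present x t = b} \<inter> {t. map (\<lambda>x. present x t) J = l'}"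
      using Cons by auto
    then show ?thesis using Q Cons.IH[of l'] by auto
  qed
qed

lemma pres_meas: "(\<lambda>t. map (\<lambda>x. present x t) J) \<in> borel \<rightarrow>\<^sub>M count_space UNIV"
proof (subst measurable_count_space_eq2_countable, intro conjI ballI)
  show "(\<lambda>t. map (\<lambda>x. present x t) J) \<in> space borel \<rightarrow> UNIV" by simp
  fix l :: "bool list"
  have "(\<lambda>t. map (\<lambda>x. present x t) J) -` {l} \<inter> space borel = {t. map (\<lambda>x. present x t) J = l}" by auto
  then show "(\<lambda>t. map (\<lambda>x. present x t) J) -` {l} \<inter> space borel \<in> sets borel" using pres_sets by simp
qed

definition Gopt :: "item list \<Rightarrow> bool list \<Rightarrow> nat" where
  "Gopt J l = (LEAST k. \<exists>f :: nat \<Rightarrow> nat.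
      (\<forall>i<length J. l ! i \<longrightarrow> f i < k) \<and>
      (\<forall>b<k. (\<Sum>i | i < length J \<and> l ! i \<and> f i = b. sz (J ! i)) \<le> 1))"

lemma OPT_t_G: "OPT_t J t = Gopt J (map (\<lambda>x. present x t) J)"
  unfolding OPT_t_def Gopt_def by (simp cong: conj_cong)

lemma opt_meas: "(\<lambda>t. real (OPT_t J t)) \<in> borel_measurable borel"
proof -
  have "(\<lambda>t. real (Gopt J (map (\<lambda>x. present x t) J))) \<in> borel_measurable borel"
    using measurable_compose[OF pres_meas[of J] borel_measurable_count_space[of "\<lambda>l. real (Gopt J l)" UNIV]] by simp
  then show ?thesis unfolding OPT_t_G .
qed

lemma ind_int: fixes a b c :: real shows "a \<le> b \<Longrightarrow> integrable lborel (\<lambda>t. c * indicator {a..<b} t :: real)"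
  by (intro integrable_mult_right integrable_real_indicator atLeastLessThan_borel) (simp_all add: emeasure_lborel_Ico)

lemma ind_integral: fixes a b c :: real shows "a \<le> b \<Longrightarrow> integral\<^sup>L lborel (\<lambda>t. c * indicator {a..<b} t :: real) = c * (b - a)"
  using atLeastLessThan_borel[of a b] by (simp add: emeasure_lborel_Ico)

definition Wf :: "item list \<Rightarrow> real \<Rightarrow> real" where
  "Wf J t = (\<Sum>i<length J. sz (J!i) * indicator {arr (J!i) ..< arr (J!i) + dur (J!i)} t)"

definition Vf :: "item list \<Rightarrow> real \<Rightarrow> real \<Rightarrow> real" where
  "Vf J m t = (\<Sum>i<length J. sz (J!i) * indicator {arr (J!i) ..< arr (J!i) + dur (J!i) + m} t)"

lemma Vf_int:
  assumes v: "valid_instance J" and m: "0 \<le> m"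
  shows "integrable lborel (Vf J m)" "integral\<^sup>L lborel (Vf J m) = (\<Sum>i<length J. sz (J!i) * (dur (J!i) + m))"
proof -
  have d: "\<And>i. i < length J \<Longrightarrow> arr (J!i) \<le> arr (J!i) + dur (J!i) + m"
    using v m unfolding valid_instance_def by (smt (verit) nth_mem)
  show "integrable lborel (Vf J m)" unfolding Vf_def using d by (intro Bochner_Integration.integrable_sum ind_int) auto
  have "integral\<^sup>L lborel (Vf J m) = (\<Sum>i<length J. integral\<^sup>L lborel (\<lambda>t. sz (J!i) * indicator {arr (J!i) ..< arr (J!i) + dur (J!i) + m} t))"
    unfolding Vf_def using d by (intro Bochner_Integration.integral_sum ind_int) auto
  also have "\<dots> = (\<Sum>i<length J. sz (J!i) * (dur (J!i) + m))"
    using d by (intro sum.cong refl) (simp add: ind_integral)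
  finally show "integral\<^sup>L lborel (Vf J m) = (\<Sum>i<length J. sz (J!i) * (dur (J!i) + m))" .
qed

lemma Wf_Vf: "Wf J t = Vf J 0 t" unfolding Wf_def Vf_def by simp

lemma Wf_eq: "Wf J t = (\<Sum>i<length J. if present (J!i) t then sz (J!i) else 0)"
  unfolding Wf_def present_def by (intro sum.cong refl) (auto simp: indicator_def)

lemma opt_int:
  assumes v: "valid_instance J"
  shows "integrable lborel (\<lambda>t. real (OPT_t J t))"
proof (rule Bochner_Integration.integrable_bound)
  show "(\<lambda>t. real (OPT_t J t)) \<in> borel_measurable lborel" using opt_meas by simp
  let ?g = "\<lambda>t. \<Sum>i<length J. real (length J) * indicator {arr (J!i) ..< arr (J!i) + dur (J!i)} t"
  have d: "\<And>i. i < length J \<Longrightarrow> arr (J!i) \<le> arr (J!i) + dur (J!i)"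
    using v unfolding valid_instance_def by (smt (verit) nth_mem)
  show "integrable lborel ?g" using d by (intro Bochner_Integration.integrable_sum ind_int) auto
  show "AE t in lborel. norm (real (OPT_t J t)) \<le> norm (?g t)"
  proof (intro AE_I2)
    fix t
    have g0: "0 \<le> ?g t" by (intro sum_nonneg) auto
    show "norm (real (OPT_t J t)) \<le> norm (?g t)"
    proof (cases "\<exists>i<length J. present (J!i) t")
      case False
      then show ?thesis using opt_zero[of J t] by simp
    next
      case True
      then obtain i where i: "i < length J" "present (J!i) t" by blast
      have "real (OPT_t J t) \<le> real (length J)" using opt_le_n[OF v] by simp
      also have "\<dots> = real (length J) * indicator {arr (J!i) ..< arr (J!i) + dur (J!i)} t"
        using i(2) unfolding present_def by (simp add: indicator_def)
      also have "\<dots> \<le> ?g t" using i(1) by (intro member_le_sum) auto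
      finally show ?thesis using g0 by simp
    qed
  qed
qed

lemma W_le_OPT:
  assumes v: "valid_instance J"
  shows "(\<Sum>i<length J. sz (J!i) * dur (J!i)) \<le> OPT J"
proof -
  have "(\<Sum>i<length J. sz (J!i) * dur (J!i)) = integral\<^sup>L lborel (Vf J 0)"
    using Vf_int[OF v, of 0] by simp
  also have "\<dots> \<le> integral\<^sup>L lborel (\<lambda>t. real (OPT_t J t))"
  proof (rule Bochner_Integration.integral_mono)
    show "integrable lborel (Vf J 0)" using Vf_int[OF v, of 0] by simp
    show "integrable lborel (\<lambda>t. real (OPT_t J t))" by (rule opt_int[OF v])
    fix t show "Vf J 0 t \<le> real (OPT_t J t)" using Wf_Vf[of J t] Wf_eq[of J t] opt_W[OF v, of t] by simp
  qed
  finally show ?thesis unfolding OPT_def .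
qed

lemma sp_arr[simp]: "arr (small_part C x) = arr x"
  unfolding small_part_def first_migration_def arr_def by (auto split: if_splits)
lemma sp_sz[simp]: "sz (small_part C x) = sz x"
  unfolding small_part_def first_migration_def sz_def by (auto split: if_splits)
lemma sp_dur_le: "dur (small_part C x) \<le> dur x"
  unfolding small_part_def first_migration_def dur_def arr_def by (auto split: if_splits)
lemma sp_dur_mu: "dur (small_part C x) \<le> sqrt C"
  unfolding small_part_def first_migration_def dur_def arr_def by (auto split: if_splits)
lemma sp_present: "present (small_part C x) s \<Longrightarrow> present x s"
  using sp_dur_le[of C x] unfolding present_def by auto

lemma sum_idx_list: "(\<Sum>q<length ys. g (ys!q)) = sum_list (map g ys)"
  by (simp add: sum_list_sum_nth atLeast0LessThan)

lemma sum_sort: "(\<Sum>q<length (sort_key k xs). g (sort_key k xs ! q)) = (\<Sum>i<length xs. (g (xs!i) :: real))"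
proof -
  have "sum_list (map g (sort_key k xs)) = sum_list (map g xs)"
    by (metis mset_map mset_sort sum_mset_sum_list)
  then show ?thesis unfolding sum_idx_list by simp
qed

lemma ff_ob: "ff_open_bins S t = card (ob (F (sort_key arr S)) t)"
  unfolding ff_open_bins_def ff_assign_def F_def ob_def by simp

lemma pointwise_inst:
  assumes C: "1 \<le> C" and v: "valid_instance J" and d1: "\<forall>x\<in>set J. 1 \<le> dur x"
  shows "real (ff_open_bins (small_parts C J) t) \<le> 2 * real (OPT_t J t) + 2 * Vf J (sqrt C) t"
proof -
  let ?sp = "small_part C"
  let ?S = "small_parts C J"
  let ?L = "sort_key arr ?S"
  let ?n = "length J"
  have S: "?S = map ?sp J" unfolding small_parts_def by simp
  have srt: "sorted (map arr ?L)" by (simp add: sorted_sort_key)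
  have szJ: "\<And>x. x \<in> set J \<Longrightarrow> 0 \<le> sz x" using v unfolding valid_instance_def by blast
  have nnJ: "\<And>i. i < ?n \<Longrightarrow> 0 \<le> sz (J!i)" using szJ by simp
  have nn: "\<forall>y\<in>set ?L. 0 \<le> sz y" using szJ S by auto
  have V0: "0 \<le> Vf J (sqrt C) t" unfolding Vf_def using nnJ by (intro sum_nonneg) auto
  define Nb where "Nb = (\<Sum>q<length ?L. if present (?L!q) t \<and> 1/2 < sz (?L!q) then 1 else 0::real)"
  have Nb_le: "Nb \<le> real (OPT_t J t)"
  proof -
    have "Nb = (\<Sum>i<length ?S. (\<lambda>y. if present y t \<and> 1/2 < sz y then 1 else 0) (?S!i))"
      unfolding Nb_def by (rule sum_sort)
    also have "\<dots> = (\<Sum>i<?n. if present (?sp (J!i)) t \<and> 1/2 < sz (?sp (J!i)) then 1 else 0)"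
      unfolding S by simp
    also have "\<dots> \<le> (\<Sum>i<?n. if present (J!i) t \<and> 1/2 < sz (J!i) then 1 else 0)"
      by (intro sum_mono) (auto dest: sp_present)
    also have "\<dots> = real (card {i. i < ?n \<and> present (J!i) t \<and> 1/2 < sz (J!i)})"
    proof -
      have e: "{i. i < ?n \<and> present (J!i) t \<and> 1/2 < sz (J!i)} = {i\<in>{..<?n}. present (J!i) t \<and> 1/2 < sz (J!i)}" by auto
      have "(\<Sum>i\<in>{i\<in>{..<?n}. present (J!i) t \<and> 1/2 < sz (J!i)}. 1) = (\<Sum>i<?n. if present (J!i) t \<and> 1/2 < sz (J!i) then 1 else (0::real))"
        by (rule sum.inter_filter) simp
      then show ?thesis unfolding e by simp
    qed
    also have "\<dots> \<le> real (OPT_t J t)" using opt_big[OF v, of t] by simp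
    finally show ?thesis .
  qed
  have main: "real (card (ob (F ?L) t)) \<le> Nb \<or>
    (\<exists>p<length ?L. present (?L!p) t \<and> real (card (ob (F ?L) t)) \<le> Nb + 1 + 2 *
        (\<Sum>q<length ?L. if present (?L!q) (arr (?L!p)) then sz (?L!q) else 0))"
    unfolding Nb_def by (rule pointwise[OF srt nn])
  show ?thesis
  proof (cases "real (card (ob (F ?L) t)) \<le> Nb")
    case True
    then show ?thesis unfolding ff_ob using Nb_le V0 by simp
  next
    case False
    then obtain p where p: "p < length ?L" "present (?L!p) t"
      and cb: "real (card (ob (F ?L) t)) \<le> Nb + 1 + 2 *
        (\<Sum>q<length ?L. if present (?L!q) (arr (?L!p)) then sz (?L!q) else 0)"
      using main by blast
    define a where "a = arr (?L!p)"
    have "?L!p \<in> set ?S" using p(1) by (metis nth_mem set_sort)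
    then obtain x where x: "x \<in> set J" "?L!p = ?sp x" using S by auto
    have at: "a \<le> t" "t < a + sqrt C"
      using p(2) sp_dur_mu[of C x] x(2) unfolding a_def present_def by auto
    obtain i where i: "i < ?n" "J!i = x" using x(1) by (metis in_set_conv_nth)
    have "present (J!i) t" using p(2) x(2) i(2) sp_present by metis
    then have one: "1 \<le> real (OPT_t J t)" using opt_ge1[OF v i(1)] by simp
    have "(\<Sum>q<length ?L. if present (?L!q) a then sz (?L!q) else 0)
        = (\<Sum>i<length ?S. (\<lambda>y. if present y a then sz y else 0) (?S!i))"
      by (rule sum_sort)
    also have "\<dots> = (\<Sum>j<length ?S. if present (?sp (J!j)) a then sz (?sp (J!j)) else 0)"
    proof (intro sum.cong refl)
      fix x assume "x \<in> {..<length ?S}"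
      then have "?S ! x = ?sp (J!x)" unfolding S by simp
      then show "(\<lambda>y. if present y a then sz y else 0) (?S!x) = (if present (?sp (J!x)) a then sz (?sp (J!x)) else 0)"
        by simp
    qed
    also have "\<dots> = (\<Sum>j<?n. if present (?sp (J!j)) a then sz (?sp (J!j)) else 0)"
      by (simp only: S length_map)
    also have "\<dots> \<le> Vf J (sqrt C) t"
      unfolding Vf_def
    proof (intro sum_mono)
      fix j assume j: "j \<in> {..<?n}"
      show "(if present (?sp (J!j)) a then sz (?sp (J!j)) else 0) \<le>
            sz (J!j) * indicator {arr (J!j) ..< arr (J!j) + dur (J!j) + sqrt C} t"
      proof (cases "present (?sp (J!j)) a")
        case True
        then have "arr (J!j) \<le> a" "a < arr (J!j) + dur (J!j)"
          using sp_dur_le[of C "J!j"] unfolding present_def by auto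
        then have "t \<in> {arr (J!j) ..< arr (J!j) + dur (J!j) + sqrt C}" using at by auto
        then show ?thesis using True by simp
      next
        case False
        then show ?thesis using nnJ j by simp
      qed
    qed
    finally have "real (card (ob (F ?L) t)) \<le> Nb + 1 + 2 * Vf J (sqrt C) t"
      using cb unfolding a_def by linarith
    then show ?thesis unfolding ff_ob using Nb_le one by linarith
  qed
qed

theorem lemma16:
  shows "\<exists>K::real. \<forall>C::real. \<forall>J::item list.
           1 \<le> C \<longrightarrow> valid_instance J \<longrightarrow> (\<forall>x\<in>set J. 1 \<le> dur x) \<longrightarrow>
           FirstFit (small_parts C J) \<le> K * sqrt C * OPT J"
proof (intro exI[of _ 6] allI impI)
  fix C :: real and J :: "item list"
  assume C: "1 \<le> C" and v: "valid_instance J" and d1: "\<forall>x\<in>set J. 1 \<le> dur x"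
  define m where "m = sqrt C"
  have m1: "1 \<le> m" unfolding m_def using C by simp
  let ?ff = "\<lambda>t. real (ff_open_bins (small_parts C J) t)"
  let ?opt = "\<lambda>t. real (OPT_t J t)"
  have OPT0: "0 \<le> OPT J" unfolding OPT_def by (intro Bochner_Integration.integral_nonneg) simp
  have szJ: "\<And>i. i < length J \<Longrightarrow> 0 \<le> sz (J!i)" using v unfolding valid_instance_def by (meson nth_mem)
  have dJ: "\<And>i. i < length J \<Longrightarrow> 1 \<le> dur (J!i)" using d1 by simp
  have intV: "integrable lborel (Vf J m)" using Vf_int[OF v, of m] m1 by simp
  have intO: "integrable lborel ?opt" by (rule opt_int[OF v])
  have IV: "integral\<^sup>L lborel (Vf J m) \<le> (1 + m) * OPT J"
  proof -
    have "integral\<^sup>L lborel (Vf J m) = (\<Sum>i<length J. sz (J!i) * (dur (J!i) + m))"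
      using Vf_int[OF v, of m] m1 by simp
    also have "\<dots> \<le> (\<Sum>i<length J. (1 + m) * (sz (J!i) * dur (J!i)))"
    proof (intro sum_mono)
      fix i assume "i \<in> {..<length J}"
      then have s: "0 \<le> sz (J!i)" and d: "1 \<le> dur (J!i)" using szJ dJ by auto
      have "sz (J!i) * m \<le> sz (J!i) * m * dur (J!i)"
        using s d m1 by (metis mult_left_mono mult.right_neutral mult_nonneg_nonneg order_trans zero_le_one)
      then show "sz (J!i) * (dur (J!i) + m) \<le> (1 + m) * (sz (J!i) * dur (J!i))"
        by (simp add: algebra_simps)
    qed
    also have "\<dots> = (1 + m) * (\<Sum>i<length J. sz (J!i) * dur (J!i))" by (simp add: sum_distrib_left)
    also have "\<dots> \<le> (1 + m) * OPT J" using W_le_OPT[OF v] m1 by (intro mult_left_mono) auto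
    finally show ?thesis .
  qed
  show "FirstFit (small_parts C J) \<le> 6 * sqrt C * OPT J"
  proof (cases "integrable lborel ?ff")
    case False
    then have "FirstFit (small_parts C J) = 0" unfolding FirstFit_def by (simp add: not_integrable_integral_eq)
    then show ?thesis using OPT0 C by simp
  next
    case True
    have "FirstFit (small_parts C J) \<le> integral\<^sup>L lborel (\<lambda>t. 2 * ?opt t + 2 * Vf J m t)"
      unfolding FirstFit_def
    proof (rule Bochner_Integration.integral_mono)
      show "integrable lborel ?ff" by (rule True)
      show "integrable lborel (\<lambda>t. 2 * ?opt t + 2 * Vf J m t)" using intO intV by simp
      fix t show "?ff t \<le> 2 * ?opt t + 2 * Vf J m t"
        using pointwise_inst[OF C v d1, of t] unfolding m_def by simp
    qed
    also have "\<dots> = 2 * OPT J + 2 * integral\<^sup>L lborel (Vf J m)"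
      using intO intV unfolding OPT_def by simp
    also have "\<dots> \<le> 2 * OPT J + 2 * ((1 + m) * OPT J)" using IV by simp
    also have "\<dots> \<le> 6 * m * OPT J"
    proof -
      have "(4 + 2 * m) * OPT J \<le> (6 * m) * OPT J" using m1 OPT0 by (intro mult_right_mono) auto
      then show ?thesis by (simp add: algebra_simps)
    qed
    finally show ?thesis unfolding m_def .
  qed
qed

end
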